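(* Let $(T,\eta,\mu,T_0,m_0)$ be an ideal monad on a category $\mathcal{C}$ with finite coproducts. Then the Eilenberg–Moore category $\mathbf{EM}(T)$ is isomorphic to the full subcategory of the category $\mathbf{Alg}(T_0)$ of functor $T_0$-algebras consisting of those $a:T_0X\to X$ satisfying $a\circ m_{0,X}=a\circ T_0[\mathrm{id}_X,a]$ (as maps $T_0TX=T_0(X+T_0X)\to X$).
   Context: An ideal monad $(T,\eta,\mu,T_0,m_0)$ on a category with finite coproducts consists of a monad $(T,\eta,\mu)$ with $T=\mathrm{Id}+T_0$ for an endofunctor $T_0$, unit $\eta=\mathrm{inl}:\mathrm{Id}\to\mathrm{Id}+T_0$, and a natural transformation $m_0:T_0T\to T_0$ such that $\mu\circ\mathrm{inr}_T=\mathrm{inr}\circ m_0$, equivalently $\mu=[\mathrm{id}_{\mathrm{Id}+T_0},\ \mathrm{inr}\circ m_0]$. A functor $T_0$-algebra is a morphism $a:T_0X\to X$; a morphism of such algebras $a\to b$ is $f:X\to Y$ with $f\circ a=b\circ T_0f$. *)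

theory Defs
  imports Main
begin

record ('o,'a) cat =
  Obj :: "'o set"
  Arr :: "'a set"
  Dom :: "'a \<Rightarrow> 'o"
  Cod :: "'a \<Rightarrow> 'o"
  Ide :: "'o \<Rightarrow> 'a"
  Comp :: "'a \<Rightarrow> 'a \<Rightarrow> 'a"   (* Comp C g f = g \<circ> f *)

definition hom :: "('o,'a) cat \<Rightarrow> 'o \<Rightarrow> 'o \<Rightarrow> 'a set" where
  "hom C X Y = {f \<in> Arr C. Dom C f = X \<and> Cod C f = Y}"

definition category :: "('o,'a) cat \<Rightarrow> bool" where
  "category C \<longleftrightarrow>
     (\<forall>f\<in>Arr C. Dom C f \<in> Obj C \<and> Cod C f \<in> Obj C) \<and>
     (\<forall>X\<in>Obj C. Ide C X \<in> hom C X X) \<and>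
     (\<forall>f\<in>Arr C. \<forall>g\<in>Arr C. Cod C f = Dom C g \<longrightarrow> Comp C g f \<in> hom C (Dom C f) (Cod C g)) \<and>
     (\<forall>f\<in>Arr C. Comp C f (Ide C (Dom C f)) = f \<and> Comp C (Ide C (Cod C f)) f = f) \<and>
     (\<forall>f\<in>Arr C. \<forall>g\<in>Arr C. \<forall>h\<in>Arr C. Cod C f = Dom C g \<longrightarrow> Cod C g = Dom C h \<longrightarrow>
        Comp C h (Comp C g f) = Comp C (Comp C h g) f)"

definition "functor" :: "('o,'a) cat \<Rightarrow> ('p,'b) cat \<Rightarrow> ('o \<Rightarrow> 'p) \<Rightarrow> ('a \<Rightarrow> 'b) \<Rightarrow> bool" where
  "functor C D Fo Fa \<longleftrightarrow>
     (\<forall>X\<in>Obj C. Fo X \<in> Obj D) \<and>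
     (\<forall>f\<in>Arr C. Fa f \<in> hom D (Fo (Dom C f)) (Fo (Cod C f))) \<and>
     (\<forall>X\<in>Obj C. Fa (Ide C X) = Ide D (Fo X)) \<and>
     (\<forall>f\<in>Arr C. \<forall>g\<in>Arr C. Cod C f = Dom C g \<longrightarrow> Fa (Comp C g f) = Comp D (Fa g) (Fa f))"

definition nat_trans :: "('o,'a) cat \<Rightarrow> ('p,'b) cat \<Rightarrow> ('o \<Rightarrow> 'p) \<Rightarrow> ('a \<Rightarrow> 'b)
    \<Rightarrow> ('o \<Rightarrow> 'p) \<Rightarrow> ('a \<Rightarrow> 'b) \<Rightarrow> ('o \<Rightarrow> 'b) \<Rightarrow> bool" where
  "nat_trans C D Fo Fa Go Ga \<tau> \<longleftrightarrow>
     (\<forall>X\<in>Obj C. \<tau> X \<in> hom D (Fo X) (Go X)) \<and>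
     (\<forall>f\<in>Arr C. Comp D (\<tau> (Cod C f)) (Fa f) = Comp D (Ga f) (\<tau> (Dom C f)))"

definition iso_cat :: "('o,'a) cat \<Rightarrow> ('p,'b) cat \<Rightarrow> bool" where
  "iso_cat C D \<longleftrightarrow> (\<exists>Fo Fa Go Ga. functor C D Fo Fa \<and> functor D C Go Ga \<and>
     (\<forall>X\<in>Obj C. Go (Fo X) = X) \<and> (\<forall>f\<in>Arr C. Ga (Fa f) = f) \<and>
     (\<forall>Y\<in>Obj D. Fo (Go Y) = Y) \<and> (\<forall>g\<in>Arr D. Fa (Ga g) = g))"

definition binary_coproduct :: "('o,'a) cat \<Rightarrow> 'o \<Rightarrow> 'o \<Rightarrow> 'o \<Rightarrow> 'a \<Rightarrow> 'a \<Rightarrow> bool" where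
  "binary_coproduct C X Y P i j \<longleftrightarrow> P \<in> Obj C \<and> i \<in> hom C X P \<and> j \<in> hom C Y P \<and>
     (\<forall>Z\<in>Obj C. \<forall>f\<in>hom C X Z. \<forall>g\<in>hom C Y Z.
        \<exists>!h. h \<in> hom C P Z \<and> Comp C h i = f \<and> Comp C h j = g)"

definition initial_object :: "('o,'a) cat \<Rightarrow> 'o \<Rightarrow> bool" where
  "initial_object C I \<longleftrightarrow> I \<in> Obj C \<and> (\<forall>Z\<in>Obj C. \<exists>!h. h \<in> hom C I Z)"

definition has_finite_coproducts ::
  "('o,'a) cat \<Rightarrow> ('o \<Rightarrow> 'o \<Rightarrow> 'o) \<Rightarrow> ('o \<Rightarrow> 'o \<Rightarrow> 'a) \<Rightarrow> ('o \<Rightarrow> 'o \<Rightarrow> 'a) \<Rightarrow> bool" where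
  "has_finite_coproducts C cp inl inr \<longleftrightarrow> (\<exists>I. initial_object C I) \<and>
     (\<forall>X\<in>Obj C. \<forall>Y\<in>Obj C. binary_coproduct C X Y (cp X Y) (inl X Y) (inr X Y))"

definition copair ::
  "('o,'a) cat \<Rightarrow> ('o \<Rightarrow> 'o \<Rightarrow> 'o) \<Rightarrow> ('o \<Rightarrow> 'o \<Rightarrow> 'a) \<Rightarrow> ('o \<Rightarrow> 'o \<Rightarrow> 'a) \<Rightarrow> 'a \<Rightarrow> 'a \<Rightarrow> 'a" where
  "copair C cp inl inr f g = (THE h. h \<in> hom C (cp (Dom C f) (Dom C g)) (Cod C f) \<and>
       Comp C h (inl (Dom C f) (Dom C g)) = f \<and> Comp C h (inr (Dom C f) (Dom C g)) = g)"

definition monad :: "('o,'a) cat \<Rightarrow> ('o \<Rightarrow> 'o) \<Rightarrow> ('a \<Rightarrow> 'a) \<Rightarrow> ('o \<Rightarrow> 'a) \<Rightarrow> ('o \<Rightarrow> 'a) \<Rightarrow> bool" where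
  "monad C To Ta \<eta> \<mu> \<longleftrightarrow> functor C C To Ta \<and>
     nat_trans C C (\<lambda>X. X) (\<lambda>f. f) To Ta \<eta> \<and>
     nat_trans C C (\<lambda>X. To (To X)) (\<lambda>f. Ta (Ta f)) To Ta \<mu> \<and>
     (\<forall>X\<in>Obj C. Comp C (\<mu> X) (\<eta> (To X)) = Ide C (To X) \<and>
                Comp C (\<mu> X) (Ta (\<eta> X)) = Ide C (To X) \<and>
                Comp C (\<mu> X) (\<mu> (To X)) = Comp C (\<mu> X) (Ta (\<mu> X)))"

definition ideal_monad ::
  "('o,'a) cat \<Rightarrow> ('o \<Rightarrow> 'o \<Rightarrow> 'o) \<Rightarrow> ('o \<Rightarrow> 'o \<Rightarrow> 'a) \<Rightarrow> ('o \<Rightarrow> 'o \<Rightarrow> 'a) \<Rightarrow>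
   ('o \<Rightarrow> 'o) \<Rightarrow> ('a \<Rightarrow> 'a) \<Rightarrow> ('o \<Rightarrow> 'a) \<Rightarrow> ('o \<Rightarrow> 'a) \<Rightarrow>
   ('o \<Rightarrow> 'o) \<Rightarrow> ('a \<Rightarrow> 'a) \<Rightarrow> ('o \<Rightarrow> 'a) \<Rightarrow> bool" where
  "ideal_monad C cp inl inr To Ta \<eta> \<mu> T0o T0a m0 \<longleftrightarrow>
     monad C To Ta \<eta> \<mu> \<and> functor C C T0o T0a \<and>
     (\<forall>X\<in>Obj C. To X = cp X (T0o X)) \<and>
     (\<forall>f\<in>Arr C. Ta f = copair C cp inl inr
                         (Comp C (inl (Cod C f) (T0o (Cod C f))) f)
                         (Comp C (inr (Cod C f) (T0o (Cod C f))) (T0a f))) \<and>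
     (\<forall>X\<in>Obj C. \<eta> X = inl X (T0o X)) \<and>
     nat_trans C C (\<lambda>X. T0o (To X)) (\<lambda>f. T0a (Ta f)) T0o T0a m0 \<and>
     (\<forall>X\<in>Obj C. Comp C (\<mu> X) (inr (To X) (T0o (To X))) = Comp C (inr X (T0o X)) (m0 X))"

definition em_cat :: "('o,'a) cat \<Rightarrow> ('o \<Rightarrow> 'o) \<Rightarrow> ('a \<Rightarrow> 'a) \<Rightarrow> ('o \<Rightarrow> 'a) \<Rightarrow> ('o \<Rightarrow> 'a)
    \<Rightarrow> ('o \<times> 'a, ('o \<times> 'a) \<times> ('o \<times> 'a) \<times> 'a) cat" where
  "em_cat C To Ta \<eta> \<mu> = (let Ob = {(X, a). X \<in> Obj C \<and> a \<in> hom C (To X) X \<and>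
          Comp C a (\<eta> X) = Ide C X \<and> Comp C a (\<mu> X) = Comp C a (Ta a)} in
     \<lparr> Obj = Ob,
       Arr = {(A, B, f). A \<in> Ob \<and> B \<in> Ob \<and> f \<in> hom C (fst A) (fst B) \<and>
                Comp C f (snd A) = Comp C (snd B) (Ta f)},
       Dom = (\<lambda>(A, B, f). A),
       Cod = (\<lambda>(A, B, f). B),
       Ide = (\<lambda>A. (A, A, Ide C (fst A))),
       Comp = (\<lambda>(B', C', g) (A, B, f). (A, C', Comp C g f)) \<rparr>)"

definition alg_sub :: "('o,'a) cat \<Rightarrow> ('o \<Rightarrow> 'o \<Rightarrow> 'o) \<Rightarrow> ('o \<Rightarrow> 'o \<Rightarrow> 'a) \<Rightarrow> ('o \<Rightarrow> 'o \<Rightarrow> 'a)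
    \<Rightarrow> ('o \<Rightarrow> 'o) \<Rightarrow> ('a \<Rightarrow> 'a) \<Rightarrow> ('o \<Rightarrow> 'a)
    \<Rightarrow> ('o \<times> 'a, ('o \<times> 'a) \<times> ('o \<times> 'a) \<times> 'a) cat" where
  "alg_sub C cp inl inr T0o T0a m0 = (let Ob = {(X, a). X \<in> Obj C \<and> a \<in> hom C (T0o X) X \<and>
          Comp C a (m0 X) = Comp C a (T0a (copair C cp inl inr (Ide C X) a))} in
     \<lparr> Obj = Ob,
       Arr = {(A, B, f). A \<in> Ob \<and> B \<in> Ob \<and> f \<in> hom C (fst A) (fst B) \<and>
                Comp C f (snd A) = Comp C (snd B) (T0a f)},
       Dom = (\<lambda>(A, B, f). A),
       Cod = (\<lambda>(A, B, f). B),
       Ide = (\<lambda>A. (A, A, Ide C (fst A))),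
       Comp = (\<lambda>(B', C', g) (A, B, f). (A, C', Comp C g f)) \<rparr>)"

end

theory Submission
  imports Defs
begin

locale im =
  fixes C :: "('o, 'a) cat" and cp inl inr To Ta \<eta> \<mu> T0o T0a m0
  assumes cat: "category C"
    and fc: "has_finite_coproducts C cp inl inr"
    and idm: "ideal_monad C cp inl inr To Ta \<eta> \<mu> T0o T0a m0"
begin

lemma hom_obj: "f \<in> hom C X Y \<Longrightarrow> X \<in> Obj C \<and> Y \<in> Obj C"
  using cat unfolding category_def hom_def by auto

lemma comp_hom: "f \<in> hom C X Y \<Longrightarrow> g \<in> hom C Y Z \<Longrightarrow> Comp C g f \<in> hom C X Z"
  using cat unfolding category_def hom_def by (smt (verit) mem_Collect_eq)

lemma ide_hom: "X \<in> Obj C \<Longrightarrow> Ide C X \<in> hom C X X"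
  using cat unfolding category_def by auto

lemma ide_l: "f \<in> hom C X Y \<Longrightarrow> Comp C (Ide C Y) f = f"
  using cat unfolding category_def hom_def by auto

lemma ide_r: "f \<in> hom C X Y \<Longrightarrow> Comp C f (Ide C X) = f"
  using cat unfolding category_def hom_def by auto

lemma assoc: "f \<in> hom C X Y \<Longrightarrow> g \<in> hom C Y Z \<Longrightarrow> h \<in> hom C Z W \<Longrightarrow>
   Comp C h (Comp C g f) = Comp C (Comp C h g) f"
  using cat unfolding category_def hom_def by auto

lemma bc: "X \<in> Obj C \<Longrightarrow> Y \<in> Obj C \<Longrightarrow> binary_coproduct C X Y (cp X Y) (inl X Y) (inr X Y)"
  using fc unfolding has_finite_coproducts_def by auto

lemma inl_hom: "X \<in> Obj C \<Longrightarrow> Y \<in> Obj C \<Longrightarrow> inl X Y \<in> hom C X (cp X Y)"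
  using bc unfolding binary_coproduct_def by auto

lemma inr_hom: "X \<in> Obj C \<Longrightarrow> Y \<in> Obj C \<Longrightarrow> inr X Y \<in> hom C Y (cp X Y)"
  using bc unfolding binary_coproduct_def by auto

lemma cp_obj: "X \<in> Obj C \<Longrightarrow> Y \<in> Obj C \<Longrightarrow> cp X Y \<in> Obj C"
  using bc unfolding binary_coproduct_def by auto

lemma copair:
  assumes "f \<in> hom C X Z" "g \<in> hom C Y Z"
  shows "copair C cp inl inr f g \<in> hom C (cp X Y) Z \<and>
         Comp C (copair C cp inl inr f g) (inl X Y) = f \<and>
         Comp C (copair C cp inl inr f g) (inr X Y) = g"
proof -
  have o: "X \<in> Obj C" "Y \<in> Obj C" "Z \<in> Obj C" using assms hom_obj by blast+
  have d: "Dom C f = X" "Dom C g = Y" "Cod C f = Z" using assms unfolding hom_def by auto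
  have U: "\<forall>Z\<in>Obj C. \<forall>f\<in>hom C X Z. \<forall>g\<in>hom C Y Z.
        \<exists>!h. h \<in> hom C (cp X Y) Z \<and> Comp C h (inl X Y) = f \<and> Comp C h (inr X Y) = g"
    using bc[OF o(1,2)] unfolding binary_coproduct_def by (elim conjE)
  have "\<exists>!h. h \<in> hom C (cp X Y) Z \<and> Comp C h (inl X Y) = f \<and> Comp C h (inr X Y) = g"
    using bspec[OF bspec[OF bspec[OF U o(3)] assms(1)] assms(2)] .
  then show ?thesis unfolding copair_def d by (rule theI')
qed

lemma cp_eq:
  assumes "X \<in> Obj C" "Y \<in> Obj C" "h \<in> hom C (cp X Y) Z" "k \<in> hom C (cp X Y) Z"
    "Comp C h (inl X Y) = Comp C k (inl X Y)" "Comp C h (inr X Y) = Comp C k (inr X Y)"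
  shows "h = k"
proof -
  have z: "Z \<in> Obj C" using assms hom_obj by blast
  have "Comp C h (inl X Y) \<in> hom C X Z" "Comp C h (inr X Y) \<in> hom C Y Z"
    using comp_hom inl_hom inr_hom assms by blast+
  have U: "\<forall>Z\<in>Obj C. \<forall>f\<in>hom C X Z. \<forall>g\<in>hom C Y Z.
        \<exists>!h. h \<in> hom C (cp X Y) Z \<and> Comp C h (inl X Y) = f \<and> Comp C h (inr X Y) = g"
    using bc[OF assms(1,2)] unfolding binary_coproduct_def by (elim conjE)
  have "\<exists>!u. u \<in> hom C (cp X Y) Z \<and> Comp C u (inl X Y) = Comp C h (inl X Y) \<and> Comp C u (inr X Y) = Comp C h (inr X Y)"
    using bspec[OF bspec[OF bspec[OF U z] \<open>Comp C h (inl X Y) \<in> hom C X Z\<close>] \<open>Comp C h (inr X Y) \<in> hom C Y Z\<close>] .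
  then obtain u where uu: "\<And>v. v \<in> hom C (cp X Y) Z \<and> Comp C v (inl X Y) = Comp C h (inl X Y) \<and> Comp C v (inr X Y) = Comp C h (inr X Y) \<Longrightarrow> v = u"
    by (metis (no_types, lifting))
  have "h = u" by (rule uu) (use assms(3) in simp)
  moreover have "k = u" by (rule uu) (use assms(4-6) in simp)
  ultimately show ?thesis by simp
qed

lemma mon: "monad C To Ta \<eta> \<mu>" using idm unfolding ideal_monad_def by auto
lemma Tfun: "functor C C To Ta" using mon unfolding monad_def by auto
lemma T0fun: "functor C C T0o T0a" using idm unfolding ideal_monad_def by auto

lemma To_eq: "X \<in> Obj C \<Longrightarrow> To X = cp X (T0o X)" using idm unfolding ideal_monad_def by auto
lemma eta_eq: "X \<in> Obj C \<Longrightarrow> \<eta> X = inl X (T0o X)" using idm unfolding ideal_monad_def by auto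

lemma T0o_obj: "X \<in> Obj C \<Longrightarrow> T0o X \<in> Obj C" using T0fun unfolding functor_def by auto
lemma To_obj: "X \<in> Obj C \<Longrightarrow> To X \<in> Obj C" using Tfun unfolding functor_def by auto

lemma Ta_hom: "f \<in> hom C X Y \<Longrightarrow> Ta f \<in> hom C (To X) (To Y)"
  using Tfun unfolding functor_def hom_def by auto
lemma T0a_hom: "f \<in> hom C X Y \<Longrightarrow> T0a f \<in> hom C (T0o X) (T0o Y)"
  using T0fun unfolding functor_def hom_def by auto

lemma mu_hom: "X \<in> Obj C \<Longrightarrow> \<mu> X \<in> hom C (To (To X)) (To X)"
  using mon unfolding monad_def nat_trans_def by auto
lemma m0_hom: "X \<in> Obj C \<Longrightarrow> m0 X \<in> hom C (T0o (To X)) (T0o X)"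
  using idm unfolding ideal_monad_def nat_trans_def by auto

lemma mu_inr: "X \<in> Obj C \<Longrightarrow> Comp C (\<mu> X) (inr (To X) (T0o (To X))) = Comp C (inr X (T0o X)) (m0 X)"
  using idm unfolding ideal_monad_def by auto

lemma mu_inl: "X \<in> Obj C \<Longrightarrow> Comp C (\<mu> X) (inl (To X) (T0o (To X))) = Ide C (To X)"
  using mon eta_eq[OF To_obj] unfolding monad_def by auto

lemma Ta_eq: "f \<in> hom C X Y \<Longrightarrow> Ta f = copair C cp inl inr
                         (Comp C (inl Y (T0o Y)) f) (Comp C (inr Y (T0o Y)) (T0a f))"
  using idm unfolding ideal_monad_def hom_def by auto

lemma Ta_inl: assumes "f \<in> hom C X Y"
  shows "Comp C (Ta f) (inl X (T0o X)) = Comp C (inl Y (T0o Y)) f"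
    and "Comp C (Ta f) (inr X (T0o X)) = Comp C (inr Y (T0o Y)) (T0a f)"
proof -
  have o: "X \<in> Obj C" "Y \<in> Obj C" using assms hom_obj by auto
  have "Comp C (inl Y (T0o Y)) f \<in> hom C X (cp Y (T0o Y))"
    using comp_hom[OF assms inl_hom[OF o(2) T0o_obj[OF o(2)]]] .
  moreover have "Comp C (inr Y (T0o Y)) (T0a f) \<in> hom C (T0o X) (cp Y (T0o Y))"
    using comp_hom[OF T0a_hom[OF assms] inr_hom[OF o(2) T0o_obj[OF o(2)]]] .
  ultimately show "Comp C (Ta f) (inl X (T0o X)) = Comp C (inl Y (T0o Y)) f"
    "Comp C (Ta f) (inr X (T0o X)) = Comp C (inr Y (T0o Y)) (T0a f)"
    using copair Ta_eq[OF assms] by auto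
qed

abbreviation "E \<equiv> em_cat C To Ta \<eta> \<mu>"
abbreviation "D \<equiv> alg_sub C cp inl inr T0o T0a m0"
abbreviation "cpr \<equiv> copair C cp inl inr"

lemma E_Obj: "(X,a) \<in> Obj E \<longleftrightarrow> X \<in> Obj C \<and> a \<in> hom C (To X) X \<and> Comp C a (\<eta> X) = Ide C X \<and> Comp C a (\<mu> X) = Comp C a (Ta a)"
  by (simp add: em_cat_def Let_def)
lemma E_Arr: "(A,B,f) \<in> Arr E \<longleftrightarrow> A \<in> Obj E \<and> B \<in> Obj E \<and> f \<in> hom C (fst A) (fst B) \<and> Comp C f (snd A) = Comp C (snd B) (Ta f)"
  by (simp add: em_cat_def Let_def)
lemma E_simps: "Dom E (A,B,f) = A" "Cod E (A,B,f) = B" "Ide E A = (A, A, Ide C (fst A))"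
  "Comp E (B',C',g) (A,B,f) = (A, C', Comp C g f)"
  by (simp_all add: em_cat_def Let_def)
lemma D_Obj: "(X,b) \<in> Obj D \<longleftrightarrow> X \<in> Obj C \<and> b \<in> hom C (T0o X) X \<and> Comp C b (m0 X) = Comp C b (T0a (cpr (Ide C X) b))"
  by (simp add: alg_sub_def Let_def)
lemma D_Arr: "(A,B,f) \<in> Arr D \<longleftrightarrow> A \<in> Obj D \<and> B \<in> Obj D \<and> f \<in> hom C (fst A) (fst B) \<and> Comp C f (snd A) = Comp C (snd B) (T0a f)"
  by (simp add: alg_sub_def Let_def)
lemma D_simps: "Dom D (A,B,f) = A" "Cod D (A,B,f) = B" "Ide D A = (A, A, Ide C (fst A))"
  "Comp D (B',C',g) (A,B,f) = (A, C', Comp C g f)"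
  by (simp_all add: alg_sub_def Let_def)

lemma FO_inv:
  assumes "(X,a) \<in> Obj E"
  shows "cpr (Ide C X) (Comp C a (inr X (T0o X))) = a"
proof -
  have X: "X \<in> Obj C" and ah: "a \<in> hom C (cp X (T0o X)) X" and ae: "Comp C a (inl X (T0o X)) = Ide C X"
    using assms E_Obj To_eq eta_eq by auto
  have T: "T0o X \<in> Obj C" using T0o_obj X by auto
  have bh: "Comp C a (inr X (T0o X)) \<in> hom C (T0o X) X" using comp_hom[OF inr_hom[OF X T] ah] .
  note cc = copair[OF ide_hom[OF X] bh]
  show ?thesis
    by (rule cp_eq[OF X T]) (use cc ah ae in auto)
qed

lemma FO:
  assumes "(X,a) \<in> Obj E"
  shows "(X, Comp C a (inr X (T0o X))) \<in> Obj D"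
proof -
  have X: "X \<in> Obj C" and ah': "a \<in> hom C (To X) X" and m: "Comp C a (\<mu> X) = Comp C a (Ta a)"
    using assms E_Obj by auto
  have TX: "To X = cp X (T0o X)" using To_eq X by auto
  have ah: "a \<in> hom C (cp X (T0o X)) X" using ah' TX by simp
  have T: "T0o X \<in> Obj C" using T0o_obj X by auto
  have TTX: "To X \<in> Obj C" "T0o (To X) \<in> Obj C" using To_obj T0o_obj X by auto
  have ir: "inr X (T0o X) \<in> hom C (T0o X) (To X)" using inr_hom[OF X T] TX by simp
  have ir2: "inr (To X) (T0o (To X)) \<in> hom C (T0o (To X)) (To (To X))"
    using inr_hom[OF TTX] To_eq[OF TTX(1)] by simp
  have bh: "Comp C a (inr X (T0o X)) \<in> hom C (T0o X) X" using comp_hom[OF inr_hom[OF X T] ah] .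
  have m0h: "m0 X \<in> hom C (T0o (To X)) (T0o X)" using m0_hom X by auto
  have T0ah: "T0a a \<in> hom C (T0o (To X)) (T0o X)" using T0a_hom[OF ah'] .
  have Tah: "Ta a \<in> hom C (To (To X)) (To X)" using Ta_hom[OF ah'] by simp
  have muh: "\<mu> X \<in> hom C (To (To X)) (To X)" using mu_hom X by auto
  have "Comp C (Comp C a (inr X (T0o X))) (m0 X) = Comp C a (Comp C (inr X (T0o X)) (m0 X))"
    using assoc[OF m0h ir ah'] by simp
  also have "\<dots> = Comp C a (Comp C (\<mu> X) (inr (To X) (T0o (To X))))" using mu_inr X by simp
  also have "\<dots> = Comp C (Comp C a (\<mu> X)) (inr (To X) (T0o (To X)))"
    using assoc[OF ir2 muh ah'] by simp
  also have "\<dots> = Comp C (Comp C a (Ta a)) (inr (To X) (T0o (To X)))" using m by simp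
  also have "\<dots> = Comp C a (Comp C (Ta a) (inr (To X) (T0o (To X))))"
    using assoc[OF ir2 Tah ah'] by simp
  also have "\<dots> = Comp C a (Comp C (inr X (T0o X)) (T0a a))"
    using Ta_inl(2)[OF ah'] TX by simp
  also have "\<dots> = Comp C (Comp C a (inr X (T0o X))) (T0a a)"
    using assoc[OF T0ah ir ah'] by simp
  finally show ?thesis using D_Obj X bh FO_inv[OF assms] by simp
qed

lemma GO_inv:
  assumes "(X,b) \<in> Obj D"
  shows "Comp C (cpr (Ide C X) b) (inr X (T0o X)) = b"
  using assms copair[OF ide_hom] D_Obj by auto

lemma GO:
  assumes "(X,b) \<in> Obj D"
  shows "(X, cpr (Ide C X) b) \<in> Obj E"
proof -
  have X: "X \<in> Obj C" and bh: "b \<in> hom C (T0o X) X"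
    and m: "Comp C b (m0 X) = Comp C b (T0a (cpr (Ide C X) b))"
    using assms D_Obj by auto
  define a where "a = cpr (Ide C X) b"
  have TX: "To X = cp X (T0o X)" using To_eq X by auto
  note cc = copair[OF ide_hom[OF X] bh, folded a_def]
  have ah: "a \<in> hom C (To X) X" using cc TX by simp
  have T: "T0o X \<in> Obj C" using T0o_obj X by auto
  have TTX: "To X \<in> Obj C" "T0o (To X) \<in> Obj C" using To_obj T0o_obj X by auto
  have ir: "inr X (T0o X) \<in> hom C (T0o X) (To X)" using inr_hom[OF X T] TX by simp
  have il: "inl X (T0o X) \<in> hom C X (To X)" using inl_hom[OF X T] TX by simp
  have TTXe: "To (To X) = cp (To X) (T0o (To X))" using To_eq TTX by auto
  have ir2: "inr (To X) (T0o (To X)) \<in> hom C (T0o (To X)) (To (To X))"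
    using inr_hom[OF TTX] TTXe by simp
  have il2: "inl (To X) (T0o (To X)) \<in> hom C (To X) (To (To X))"
    using inl_hom[OF TTX] TTXe by simp
  have m0h: "m0 X \<in> hom C (T0o (To X)) (T0o X)" using m0_hom X by auto
  have T0ah: "T0a a \<in> hom C (T0o (To X)) (T0o X)" using T0a_hom[OF ah] .
  have Tah: "Ta a \<in> hom C (To (To X)) (To X)" using Ta_hom[OF ah] by simp
  have muh: "\<mu> X \<in> hom C (To (To X)) (To X)" using mu_hom X by auto
  have h1: "Comp C a (\<mu> X) \<in> hom C (cp (To X) (T0o (To X))) X" using comp_hom[OF muh ah] TTXe by simp
  have h2: "Comp C a (Ta a) \<in> hom C (cp (To X) (T0o (To X))) X" using comp_hom[OF Tah ah] TTXe by simp
  have e1: "Comp C (Comp C a (\<mu> X)) (inl (To X) (T0o (To X))) = Comp C (Comp C a (Ta a)) (inl (To X) (T0o (To X)))"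
  proof -
    have "Comp C (Comp C a (\<mu> X)) (inl (To X) (T0o (To X))) = Comp C a (Comp C (\<mu> X) (inl (To X) (T0o (To X))))"
      using assoc[OF il2 muh ah] by simp
    also have "\<dots> = a" using mu_inl X ide_r[OF ah] by simp
    also have "\<dots> = Comp C (Comp C a (inl X (T0o X))) a" using cc ide_l[OF ah] by simp
    also have "\<dots> = Comp C a (Comp C (inl X (T0o X)) a)" using assoc[OF ah il ah] by simp
    also have "\<dots> = Comp C a (Comp C (Ta a) (inl (To X) (T0o (To X))))" using Ta_inl(1)[OF ah] by simp
    also have "\<dots> = Comp C (Comp C a (Ta a)) (inl (To X) (T0o (To X)))" using assoc[OF il2 Tah ah] by simp
    finally show ?thesis .
  qed
  have e2: "Comp C (Comp C a (\<mu> X)) (inr (To X) (T0o (To X))) = Comp C (Comp C a (Ta a)) (inr (To X) (T0o (To X)))"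
  proof -
    have "Comp C (Comp C a (\<mu> X)) (inr (To X) (T0o (To X))) = Comp C a (Comp C (\<mu> X) (inr (To X) (T0o (To X))))"
      using assoc[OF ir2 muh ah] by simp
    also have "\<dots> = Comp C a (Comp C (inr X (T0o X)) (m0 X))" using mu_inr X by simp
    also have "\<dots> = Comp C (Comp C a (inr X (T0o X))) (m0 X)" using assoc[OF m0h ir ah] by simp
    also have "\<dots> = Comp C b (T0a a)" using cc m a_def by simp
    also have "\<dots> = Comp C (Comp C a (inr X (T0o X))) (T0a a)" using cc by simp
    also have "\<dots> = Comp C a (Comp C (inr X (T0o X)) (T0a a))" using assoc[OF T0ah ir ah] by simp
    also have "\<dots> = Comp C a (Comp C (Ta a) (inr (To X) (T0o (To X))))" using Ta_inl(2)[OF ah] by simp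
    also have "\<dots> = Comp C (Comp C a (Ta a)) (inr (To X) (T0o (To X)))" using assoc[OF ir2 Tah ah] by simp
    finally show ?thesis .
  qed
  have "Comp C a (\<mu> X) = Comp C a (Ta a)" by (rule cp_eq[OF TTX h1 h2 e1 e2])
  then show ?thesis using E_Obj X ah cc eta_eq[OF X] a_def by simp
qed

lemma FA:
  assumes "(X,a) \<in> Obj E" "(Y,a') \<in> Obj E" "f \<in> hom C X Y"
  shows "Comp C f a = Comp C a' (Ta f) \<longleftrightarrow>
     Comp C f (Comp C a (inr X (T0o X))) = Comp C (Comp C a' (inr Y (T0o Y))) (T0a f)"
proof -
  have X: "X \<in> Obj C" and ah: "a \<in> hom C (To X) X" and ae: "Comp C a (inl X (T0o X)) = Ide C X"
    using assms E_Obj eta_eq by auto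
  have Y: "Y \<in> Obj C" and ah': "a' \<in> hom C (To Y) Y" and ae': "Comp C a' (inl Y (T0o Y)) = Ide C Y"
    using assms E_Obj eta_eq by auto
  have TX: "To X = cp X (T0o X)" using To_eq X by auto
  have TY: "To Y = cp Y (T0o Y)" using To_eq Y by auto
  have T: "T0o X \<in> Obj C" "T0o Y \<in> Obj C" using T0o_obj X Y by auto
  have irX: "inr X (T0o X) \<in> hom C (T0o X) (To X)" using inr_hom[OF X T(1)] TX by simp
  have ilX: "inl X (T0o X) \<in> hom C X (To X)" using inl_hom[OF X T(1)] TX by simp
  have irY: "inr Y (T0o Y) \<in> hom C (T0o Y) (To Y)" using inr_hom[OF Y T(2)] TY by simp
  have ilY: "inl Y (T0o Y) \<in> hom C Y (To Y)" using inl_hom[OF Y T(2)] TY by simp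
  have Tfh: "Ta f \<in> hom C (To X) (To Y)" using Ta_hom[OF assms(3)] .
  have T0fh: "T0a f \<in> hom C (T0o X) (T0o Y)" using T0a_hom[OF assms(3)] .
  have r: "Comp C (Comp C a' (Ta f)) (inr X (T0o X)) = Comp C (Comp C a' (inr Y (T0o Y))) (T0a f)"
  proof -
    have "Comp C (Comp C a' (Ta f)) (inr X (T0o X)) = Comp C a' (Comp C (Ta f) (inr X (T0o X)))"
      using assoc[OF irX Tfh ah'] by simp
    also have "\<dots> = Comp C a' (Comp C (inr Y (T0o Y)) (T0a f))" using Ta_inl(2)[OF assms(3)] by simp
    also have "\<dots> = Comp C (Comp C a' (inr Y (T0o Y))) (T0a f)" using assoc[OF T0fh irY ah'] by simp
    finally show ?thesis .
  qed
  have l: "Comp C f (Comp C a (inr X (T0o X))) = Comp C (Comp C f a) (inr X (T0o X))"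
    using assoc[OF irX ah assms(3)] .
  show ?thesis
  proof
    assume "Comp C f a = Comp C a' (Ta f)"
    then show "Comp C f (Comp C a (inr X (T0o X))) = Comp C (Comp C a' (inr Y (T0o Y))) (T0a f)"
      using l r by simp
  next
    assume h: "Comp C f (Comp C a (inr X (T0o X))) = Comp C (Comp C a' (inr Y (T0o Y))) (T0a f)"
    have h1: "Comp C f a \<in> hom C (cp X (T0o X)) Y" using comp_hom[OF ah assms(3)] TX by simp
    have h2: "Comp C a' (Ta f) \<in> hom C (cp X (T0o X)) Y" using comp_hom[OF Tfh ah'] TX by simp
    have e1: "Comp C (Comp C f a) (inl X (T0o X)) = Comp C (Comp C a' (Ta f)) (inl X (T0o X))"
    proof -
      have "Comp C (Comp C f a) (inl X (T0o X)) = Comp C f (Comp C a (inl X (T0o X)))"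
        using assoc[OF ilX ah assms(3)] by simp
      also have "\<dots> = f" using ae ide_r[OF assms(3)] by simp
      also have "\<dots> = Comp C (Comp C a' (inl Y (T0o Y))) f" using ae' ide_l[OF assms(3)] by simp
      also have "\<dots> = Comp C a' (Comp C (inl Y (T0o Y)) f)" using assoc[OF assms(3) ilY ah'] by simp
      also have "\<dots> = Comp C a' (Comp C (Ta f) (inl X (T0o X)))" using Ta_inl(1)[OF assms(3)] by simp
      also have "\<dots> = Comp C (Comp C a' (Ta f)) (inl X (T0o X))" using assoc[OF ilX Tfh ah'] by simp
      finally show ?thesis .
    qed
    have e2: "Comp C (Comp C f a) (inr X (T0o X)) = Comp C (Comp C a' (Ta f)) (inr X (T0o X))"
      using l r h by simp
    show "Comp C f a = Comp C a' (Ta f)" by (rule cp_eq[OF X T(1) h1 h2 e1 e2])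
  qed
qed

definition "Fo = (\<lambda>(X,a). (X, Comp C a (inr X (T0o X))))"
definition "Fa = (\<lambda>(A,B,f). (Fo A, Fo B, f))"
definition "Go = (\<lambda>(X,b). (X, cpr (Ide C X) b))"
definition "Ga = (\<lambda>(A,B,f). (Go A, Go B, f))"

lemma Fo_obj: "A \<in> Obj E \<Longrightarrow> Fo A \<in> Obj D \<and> fst (Fo A) = fst A \<and> Go (Fo A) = A"
  by (cases A) (auto simp: Fo_def Go_def FO FO_inv)

lemma Go_obj: "A \<in> Obj D \<Longrightarrow> Go A \<in> Obj E \<and> fst (Go A) = fst A \<and> Fo (Go A) = A"
  by (cases A) (auto simp: Fo_def Go_def GO GO_inv)

lemma Fa_arr: assumes "(A,B,f) \<in> Arr E" shows "(Fo A, Fo B, f) \<in> Arr D"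
proof -
  obtain X a Y a' where A: "A = (X,a)" and B: "B = (Y,a')" by fastforce
  have o: "(X,a) \<in> Obj E" "(Y,a') \<in> Obj E" and fh: "f \<in> hom C X Y"
    and c: "Comp C f a = Comp C a' (Ta f)"
    using assms A B E_Arr by auto
  have FoA: "Fo A = (X, Comp C a (inr X (T0o X)))" "Fo B = (Y, Comp C a' (inr Y (T0o Y)))"
    using A B by (simp_all add: Fo_def)
  have c': "Comp C f (Comp C a (inr X (T0o X))) = Comp C (Comp C a' (inr Y (T0o Y))) (T0a f)"
    using FA[OF o fh] c by blast
  have "(X, Comp C a (inr X (T0o X))) \<in> Obj D" "(Y, Comp C a' (inr Y (T0o Y))) \<in> Obj D"
    using FO o by blast+
  then show ?thesis unfolding FoA D_Arr using fh c' by simp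
qed

lemma Ga_arr: assumes "(A,B,f) \<in> Arr D" shows "(Go A, Go B, f) \<in> Arr E"
proof -
  obtain X b Y b' where A: "A = (X,b)" and B: "B = (Y,b')" by fastforce
  have o: "(X,b) \<in> Obj D" "(Y,b') \<in> Obj D" and fh: "f \<in> hom C X Y"
    and c: "Comp C f b = Comp C b' (T0a f)"
    using assms A B D_Arr by auto
  have o': "(X, cpr (Ide C X) b) \<in> Obj E" "(Y, cpr (Ide C Y) b') \<in> Obj E" using GO o by auto
  have GoA: "Go A = (X, cpr (Ide C X) b)" "Go B = (Y, cpr (Ide C Y) b')"
    using A B by (simp_all add: Go_def)
  have c': "Comp C f (Comp C (cpr (Ide C X) b) (inr X (T0o X))) = Comp C (Comp C (cpr (Ide C Y) b') (inr Y (T0o Y))) (T0a f)"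
    using GO_inv[OF o(1)] GO_inv[OF o(2)] c by simp
  have "Comp C f (cpr (Ide C X) b) = Comp C (cpr (Ide C Y) b') (Ta f)"
    using FA[OF o' fh] c' by blast
  then show ?thesis unfolding GoA E_Arr using fh o' by simp
qed

lemma iso: "iso_cat E D"
  unfolding iso_cat_def
proof (intro exI conjI)
  show "functor E D Fo Fa"
    unfolding functor_def
  proof (intro conjI ballI impI)
    fix A assume "A \<in> Obj E" then show "Fo A \<in> Obj D" using Fo_obj by auto
  next
    fix f assume f: "f \<in> Arr E"
    obtain A B g where fe: "f = (A,B,g)" by (cases f) auto
    show "Fa f \<in> hom D (Fo (Dom E f)) (Fo (Cod E f))"
      using Fa_arr f fe by (simp add: hom_def Fa_def E_simps D_simps)
  next
    fix A assume "A \<in> Obj E" then show "Fa (Ide E A) = Ide D (Fo A)"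
      using Fo_obj by (simp add: Fa_def E_simps D_simps)
  next
    fix f g assume "f \<in> Arr E" "g \<in> Arr E" "Cod E f = Dom E g"
    then show "Fa (Comp E g f) = Comp D (Fa g) (Fa f)"
      by (cases f, cases g) (auto simp: Fa_def E_simps D_simps)
  qed
  show "functor D E Go Ga"
    unfolding functor_def
  proof (intro conjI ballI impI)
    fix A assume "A \<in> Obj D" then show "Go A \<in> Obj E" using Go_obj by auto
  next
    fix f assume f: "f \<in> Arr D"
    obtain A B g where fe: "f = (A,B,g)" by (cases f) auto
    show "Ga f \<in> hom E (Go (Dom D f)) (Go (Cod D f))"
      using Ga_arr f fe by (simp add: hom_def Ga_def E_simps D_simps)
  next
    fix A assume "A \<in> Obj D" then show "Ga (Ide D A) = Ide E (Go A)"
      using Go_obj by (simp add: Ga_def E_simps D_simps)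
  next
    fix f g assume "f \<in> Arr D" "g \<in> Arr D" "Cod D f = Dom D g"
    then show "Ga (Comp D g f) = Comp E (Ga g) (Ga f)"
      by (cases f, cases g) (auto simp: Ga_def E_simps D_simps)
  qed
  show "\<forall>X\<in>Obj E. Go (Fo X) = X" using Fo_obj by auto
  show "\<forall>Y\<in>Obj D. Fo (Go Y) = Y" using Go_obj by auto
  show "\<forall>f\<in>Arr E. Ga (Fa f) = f"
  proof
    fix f assume f: "f \<in> Arr E"
    obtain A B g where fe: "f = (A,B,g)" by (cases f) auto
    then show "Ga (Fa f) = f" using f E_Arr Fo_obj by (auto simp: Fa_def Ga_def)
  qed
  show "\<forall>f\<in>Arr D. Fa (Ga f) = f"
  proof
    fix f assume f: "f \<in> Arr D"
    obtain A B g where fe: "f = (A,B,g)" by (cases f) auto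
    then show "Fa (Ga f) = f" using f D_Arr Go_obj by (auto simp: Fa_def Ga_def)
  qed
qed

end

theorem lemma17:
  fixes C :: "('o, 'a) cat"
  assumes "category C"
    and "has_finite_coproducts C cp inl inr"
    and "ideal_monad C cp inl inr To Ta \<eta> \<mu> T0o T0a m0"
  shows "iso_cat (em_cat C To Ta \<eta> \<mu>) (alg_sub C cp inl inr T0o T0a m0)"
proof -
  interpret im C cp inl inr To Ta \<eta> \<mu> T0o T0a m0 using assms by unfold_locales
  show ?thesis by (rule iso)
qed

end
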